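(* Let $T\in B(\mathcal{F})$ be a block-diagonal operator satisfying \[\sum_{n=1}^\infty\|T|_{\mathcal{F}_{n+1}}-(T|_{\mathcal{F}_n})\otimes I\|<\infty,\] where $(T|_{\mathcal{F}_n})\otimes I$ acts on $\mathcal{F}_{n+1}=\mathcal{F}_n\otimes\mathbb{C}^d$. Then $T\in\mathcal{C}=C^*(L_1,\ldots,L_d)$.
   Context: $d\ge2$; $\xi_1,\ldots,\xi_d$ is the standard orthonormal basis of $\mathbb{C}^d$. $\mathcal{F}=\bigoplus_{n\ge0}\mathcal{F}_n$ is the full Fock space, $\mathcal{F}_0=\mathbb{C}\Omega$, $\mathcal{F}_n=(\mathbb{C}^d)^{\otimes n}$ with the usual inner product. $L_j\eta=\xi_j\otimes\eta$ (and $L_j\Omega=\xi_j$) are the left creation operators. $T$ is block-diagonal if $T(\mathcal{F}_n)\subseteq\mathcal{F}_n$ for all $n$. *)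

theory Defs
  imports "HOL-Analysis.Analysis"
begin

text \<open>Full Fock space over C^d, realised as l2 over words in the alphabet 'd
  (a finite type with CARD('d) = d). The word [i1,...,in] stands for
  xi_i1 (x) ... (x) xi_in, the empty word for the vacuum Omega.\<close>

type_synonym 'd vec = "'d list \<Rightarrow> complex"
type_synonym 'd op = "'d vec \<Rightarrow> 'd vec"

definition fock :: "'d vec set" where
  "fock = {f. (\<lambda>w. (cmod (f w))\<^sup>2) summable_on UNIV}"

definition fnorm :: "'d vec \<Rightarrow> real" where
  "fnorm f = sqrt (\<Sum>\<^sub>\<infinity>w. (cmod (f w))\<^sup>2)"

definition finner :: "'d vec \<Rightarrow> 'd vec \<Rightarrow> complex" where
  "finner f g = (\<Sum>\<^sub>\<infinity>w. cnj (f w) * g w)"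

definition fock_n :: "nat \<Rightarrow> 'd vec set" where
  "fock_n n = {f \<in> fock. \<forall>w. length w \<noteq> n \<longrightarrow> f w = 0}"

definition bounded_op :: "'d op \<Rightarrow> bool" where
  "bounded_op T \<longleftrightarrow>
     (\<forall>f\<in>fock. T f \<in> fock) \<and>
     (\<forall>f\<in>fock. \<forall>g\<in>fock. \<forall>a b. T (\<lambda>w. a * f w + b * g w) = (\<lambda>w. a * T f w + b * T g w)) \<and>
     (\<exists>C. \<forall>f\<in>fock. fnorm (T f) \<le> C * fnorm f)"

definition opnorm_on :: "'d vec set \<Rightarrow> 'd op \<Rightarrow> real" where
  "opnorm_on S T = Sup {fnorm (T f) | f. f \<in> S \<and> fnorm f \<le> 1}"

definition op_diff :: "'d op \<Rightarrow> 'd op \<Rightarrow> 'd op" where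
  "op_diff S T = (\<lambda>f w. S f w - T f w)"

definition op_add :: "'d op \<Rightarrow> 'd op \<Rightarrow> 'd op" where
  "op_add S T = (\<lambda>f w. S f w + T f w)"

definition op_scale :: "complex \<Rightarrow> 'd op \<Rightarrow> 'd op" where
  "op_scale c T = (\<lambda>f w. c * T f w)"

definition adj :: "'d op \<Rightarrow> 'd op" where
  "adj T = (SOME S. bounded_op S \<and>
              (\<forall>f\<in>fock. \<forall>g\<in>fock. finner (T f) g = finner f (S g)))"

definition create :: "'d \<Rightarrow> 'd op" where
  "create j f = (\<lambda>w. case w of [] \<Rightarrow> 0 | i # v \<Rightarrow> if i = j then f v else 0)"

inductive_set star_alg_L :: "'d op set" where
  gen: "create j \<in> star_alg_L"
| adj: "T \<in> star_alg_L \<Longrightarrow> adj T \<in> star_alg_L"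
| add: "S \<in> star_alg_L \<Longrightarrow> T \<in> star_alg_L \<Longrightarrow> op_add S T \<in> star_alg_L"
| mult: "S \<in> star_alg_L \<Longrightarrow> T \<in> star_alg_L \<Longrightarrow> S \<circ> T \<in> star_alg_L"
| scale: "T \<in> star_alg_L \<Longrightarrow> op_scale c T \<in> star_alg_L"

definition cuntz_toeplitz :: "'d op set" where
  "cuntz_toeplitz = {T. bounded_op T \<and>
     (\<forall>e>0. \<exists>S\<in>star_alg_L. opnorm_on fock (op_diff T S) < e)}"

definition block_diagonal :: "'d op \<Rightarrow> bool" where
  "block_diagonal T \<longleftrightarrow> (\<forall>n. \<forall>f\<in>fock_n n. T f \<in> fock_n n)"

text \<open>(T|F_n) (x) I acting on F_{n+1} = F_n (x) C^d, where
  xi_w (x) xi_j corresponds to the word w @ [j].\<close>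
definition tensor_id :: "nat \<Rightarrow> 'd op \<Rightarrow> 'd op" where
  "tensor_id n T = (\<lambda>f w. if length w = Suc n
       then T (\<lambda>v. if length v = n then f (v @ [last w]) else 0) (butlast w)
       else 0)"

end

theory Submission
  imports Defs
begin


definition W :: "nat \<Rightarrow> ('d::finite) list set" where
  "W k = {w. length w = k}"

lemma finite_W[simp]: "finite (W k :: ('d::finite) list set)"
  using finite_lists_length_eq[of "UNIV::'d set" k] unfolding W_def by simp

lemma finite_len[simp]: "finite {w::('d::finite) list. length w = k}"
  using finite_W[where 'd='d, of k] unfolding W_def .

lemma fock_fin:
  assumes "finite A" "\<And>w. w \<notin> A \<Longrightarrow> f w = 0"
  shows "f \<in> fock"
proof -
  have "(\<lambda>w. (cmod (f w))\<^sup>2) summable_on A" using assms(1) by simp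
  then show ?thesis unfolding fock_def
    using summable_on_cong_neutral[of UNIV A "\<lambda>w. (cmod (f w))\<^sup>2" "\<lambda>w. (cmod (f w))\<^sup>2"] assms(2)
    by auto
qed

lemma fnorm_fin:
  assumes "finite A" "\<And>w. w \<notin> A \<Longrightarrow> f w = 0"
  shows "fnorm f = L2_set (\<lambda>w. cmod (f w)) A"
proof -
  have "(\<Sum>\<^sub>\<infinity>w. (cmod (f w))\<^sup>2) = (\<Sum>\<^sub>\<infinity>w\<in>A. (cmod (f w))\<^sup>2)"
    by (rule infsum_cong_neutral) (use assms(2) in auto)
  then show ?thesis unfolding fnorm_def L2_set_def using assms(1) by simp
qed

lemma fock_n_iff: "f \<in> fock_n n \<longleftrightarrow> (\<forall>w. length w \<noteq> n \<longrightarrow> (f::('d::finite) vec) w = 0)"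
  unfolding fock_n_def using fock_fin[of "W n" f] finite_W[where 'd='d, of n] by (auto simp: W_def)

lemma fnorm_n:
  assumes "(f::('d::finite) vec) \<in> fock_n n"
  shows "fnorm f = L2_set (\<lambda>w. cmod (f w)) (W n)"
  using assms by (intro fnorm_fin) (auto simp: fock_n_iff W_def)

lemma fnorm_nonneg: "fnorm f \<ge> 0"
  unfolding fnorm_def by (simp add: infsum_nonneg)

lemma point_le_fnorm:
  assumes "f \<in> fock"
  shows "cmod (f w) \<le> fnorm f"
proof -
  have "(\<Sum>\<^sub>\<infinity>v\<in>{w}. (cmod (f v))\<^sup>2) \<le> (\<Sum>\<^sub>\<infinity>v. (cmod (f v))\<^sup>2)"
    by (rule infsum_mono_neutral) (use assms in \<open>auto simp: fock_def\<close>)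
  then have "(cmod (f w))\<^sup>2 \<le> (\<Sum>\<^sub>\<infinity>v. (cmod (f v))\<^sup>2)" by simp
  then show ?thesis unfolding fnorm_def by (simp add: real_le_rsqrt)
qed




definition ann :: "'d \<Rightarrow> 'd op" where
  "ann j f = (\<lambda>v. f (j # v))"

definition delta :: "'d list \<Rightarrow> 'd vec" where
  "delta v = (\<lambda>x. if x = v then 1 else 0)"

lemma sq_add_le: "(cmod (a + b))\<^sup>2 \<le> 2 * (cmod a)\<^sup>2 + 2 * (cmod b)\<^sup>2"
proof -
  have "(cmod (a + b))\<^sup>2 \<le> (cmod a + cmod b)\<^sup>2"
    by (rule power_mono) (auto simp: norm_triangle_ineq)
  also have "\<dots> \<le> 2 * (cmod a)\<^sup>2 + 2 * (cmod b)\<^sup>2"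
  proof -
    have "0 \<le> (cmod a - cmod b)\<^sup>2" by simp
    then show ?thesis unfolding power2_sum power2_diff by linarith
  qed
  finally show ?thesis .
qed

lemma fock_add: "f \<in> fock \<Longrightarrow> g \<in> fock \<Longrightarrow> (\<lambda>w. f w + g w) \<in> fock"
  unfolding fock_def
proof clarify
  assume f: "(\<lambda>w. (cmod (f w))\<^sup>2) summable_on UNIV" and g: "(\<lambda>w. (cmod (g w))\<^sup>2) summable_on UNIV"
  have "(\<lambda>w. 2 * (cmod (f w))\<^sup>2 + 2 * (cmod (g w))\<^sup>2) summable_on UNIV"
    by (intro summable_on_add summable_on_cmult_right f g)
  then show "(\<lambda>w. (cmod (f w + g w))\<^sup>2) summable_on UNIV"
    by (rule summable_on_comparison_test) (auto simp: sq_add_le)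
qed

lemma fock_scale: "f \<in> fock \<Longrightarrow> (\<lambda>w. c * f w) \<in> fock"
  unfolding fock_def by (auto simp: norm_mult power_mult_distrib intro: summable_on_cmult_right)

lemma fock_zero[simp]: "(\<lambda>w. 0) \<in> fock"
  by (rule fock_fin[of "{}"]) auto

lemma finner_delta: "finner (delta v) h = h v"
proof -
  have "finner (delta v) h = (\<Sum>\<^sub>\<infinity>w\<in>{v}. cnj (delta v w) * h w)"
    unfolding finner_def by (rule infsum_cong_neutral) (auto simp: delta_def)
  then show ?thesis by (simp add: delta_def)
qed

lemma delta_fock: "delta v \<in> fock"
  by (rule fock_fin[of "{v}"]) (auto simp: delta_def)

lemma create_fock: assumes "f \<in> fock" shows "create j f \<in> fock"
proof -
  have s: "(\<lambda>w. (cmod (f w))\<^sup>2) summable_on UNIV" using assms by (simp add: fock_def)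
  have "(\<lambda>w. (cmod (create j f w))\<^sup>2) \<circ> Cons j = (\<lambda>w. (cmod (f w))\<^sup>2)"
    by (auto simp: create_def)
  moreover have "(\<lambda>w. (cmod (create j f w))\<^sup>2) summable_on range (Cons j) \<longleftrightarrow>
     ((\<lambda>w. (cmod (create j f w))\<^sup>2) \<circ> Cons j) summable_on UNIV"
    by (rule summable_on_reindex) simp
  ultimately have "(\<lambda>w. (cmod (create j f w))\<^sup>2) summable_on range (Cons j)"
    using s by simp
  moreover have "(\<lambda>w. (cmod (create j f w))\<^sup>2) summable_on UNIV \<longleftrightarrow> (\<lambda>w. (cmod (create j f w))\<^sup>2) summable_on range (Cons j)"
    by (rule summable_on_cong_neutral) (auto simp: create_def split: list.splits)
  ultimately show ?thesis unfolding fock_def by simp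
qed

lemma ann_fock: assumes "f \<in> fock" shows "ann j f \<in> fock" and "fnorm (ann j f) \<le> fnorm f"
proof -
  have s: "(\<lambda>w. (cmod (f w))\<^sup>2) summable_on UNIV" using assms by (simp add: fock_def)
  have s2: "(\<lambda>w. (cmod (f w))\<^sup>2) summable_on range (Cons j)"
    by (rule summable_on_subset[OF s]) auto
  have e: "(\<lambda>w. (cmod (ann j f w))\<^sup>2) = (\<lambda>w. (cmod (f w))\<^sup>2) \<circ> Cons j"
    by (auto simp: ann_def)
  have "(\<lambda>w. (cmod (f w))\<^sup>2) summable_on range (Cons j) \<longleftrightarrow>
     ((\<lambda>w. (cmod (f w))\<^sup>2) \<circ> Cons j) summable_on UNIV"
    by (rule summable_on_reindex) simp
  then have "((\<lambda>w. (cmod (f w))\<^sup>2) \<circ> Cons j) summable_on UNIV" using s2 by simp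
  then show "ann j f \<in> fock" unfolding fock_def mem_Collect_eq e .
  have "(\<Sum>\<^sub>\<infinity>w. (cmod (ann j f w))\<^sup>2) = (\<Sum>\<^sub>\<infinity>w\<in>range (Cons j). (cmod (f w))\<^sup>2)"
    unfolding e by (subst infsum_reindex) auto
  also have "\<dots> \<le> (\<Sum>\<^sub>\<infinity>w. (cmod (f w))\<^sup>2)"
    by (rule infsum_mono_neutral[OF s2 s]) auto
  finally show "fnorm (ann j f) \<le> fnorm f" unfolding fnorm_def by simp
qed

lemma create_ann_adj:
  shows "finner (create j f) g = finner f (ann j g)"
proof -
  have "finner (create j f) g = (\<Sum>\<^sub>\<infinity>w\<in>range (Cons j). cnj (create j f w) * g w)"
    unfolding finner_def by (rule infsum_cong_neutral) (auto simp: create_def split: list.splits)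
  also have "\<dots> = (\<Sum>\<^sub>\<infinity>v. cnj (f v) * g (j # v))"
    by (subst infsum_reindex) (auto simp: create_def o_def)
  finally show ?thesis by (simp add: finner_def ann_def)
qed

lemma bounded_ann: "bounded_op (ann j)"
  unfolding bounded_op_def
proof (intro conjI ballI allI exI)
  show "\<And>f. f \<in> fock \<Longrightarrow> ann j f \<in> fock" by (rule ann_fock)
  show "\<And>f g a b. ann j (\<lambda>w. a * f w + b * g w) = (\<lambda>w. a * ann j f w + b * ann j g w)"
    by (simp add: ann_def)
  show "\<And>f. f \<in> fock \<Longrightarrow> fnorm (ann j f) \<le> 1 * fnorm f" using ann_fock by simp
qed

lemma adj_create: assumes "g \<in> fock" shows "adj (create j) g = ann j g"
proof -
  let ?P = "\<lambda>S. bounded_op S \<and> (\<forall>f\<in>fock. \<forall>g\<in>fock. finner (create j f) g = finner f (S g))"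
  have "?P (ann j)" by (simp add: bounded_ann create_ann_adj)
  then have P: "?P (adj (create j))" unfolding adj_def by (rule someI[of ?P])
  show ?thesis
  proof
    fix v
    have "adj (create j) g v = finner (delta v) (adj (create j) g)" by (simp add: finner_delta)
    also have "\<dots> = finner (create j (delta v)) g" using P assms delta_fock by metis
    also have "\<dots> = ann j g v" by (simp add: create_ann_adj finner_delta)
    finally show "adj (create j) g v = ann j g v" .
  qed
qed

definition good :: "'d op \<Rightarrow> bool" where
  "good X \<longleftrightarrow> (\<exists>S\<in>star_alg_L. \<forall>f\<in>fock. S f = X f) \<and> (\<forall>f\<in>fock. X f \<in> fock)"

lemma good_create: "good (create j)"
  unfolding good_def
proof
  show "\<exists>S\<in>star_alg_L. \<forall>f\<in>fock. S f = create j f"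
    by (rule bexI[of _ "create j"]) (auto intro: star_alg_L.gen)
  show "\<forall>f\<in>fock. create j f \<in> fock" using create_fock by auto
qed

lemma good_ann: "good (ann j)"
  unfolding good_def
proof
  show "\<exists>S\<in>star_alg_L. \<forall>f\<in>fock. S f = ann j f"
    by (rule bexI[of _ "adj (create j)"]) (auto intro: star_alg_L.gen star_alg_L.adj simp: adj_create)
  show "\<forall>f\<in>fock. ann j f \<in> fock" using ann_fock by auto
qed

lemma good_comp: assumes "good X" "good Y" shows "good (X \<circ> Y)"
proof -
  obtain S R where S: "S \<in> star_alg_L" "\<forall>f\<in>fock. S f = X f" and R: "R \<in> star_alg_L" "\<forall>f\<in>fock. R f = Y f"
    using assms unfolding good_def by blast
  have "S \<circ> R \<in> star_alg_L" using S(1) R(1) by (rule star_alg_L.mult)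
  moreover have "\<forall>f\<in>fock. (S \<circ> R) f = (X \<circ> Y) f" using S R assms unfolding good_def by auto
  ultimately have "\<exists>S\<in>star_alg_L. \<forall>f\<in>fock. S f = (X \<circ> Y) f" by blast
  moreover have "\<forall>f\<in>fock. (X \<circ> Y) f \<in> fock" using assms unfolding good_def by auto
  ultimately show ?thesis unfolding good_def by blast
qed

lemma good_add: assumes "good X" "good Y" shows "good (\<lambda>f w. X f w + Y f w)"
proof -
  obtain S R where S: "S \<in> star_alg_L" "\<forall>f\<in>fock. S f = X f" and R: "R \<in> star_alg_L" "\<forall>f\<in>fock. R f = Y f"
    using assms unfolding good_def by blast
  have "op_add S R \<in> star_alg_L" using S(1) R(1) by (rule star_alg_L.add)
  moreover have "\<forall>f\<in>fock. op_add S R f = (\<lambda>w. X f w + Y f w)" using S R by (auto simp: op_add_def)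
  ultimately have "\<exists>S\<in>star_alg_L. \<forall>f\<in>fock. S f = (\<lambda>w. X f w + Y f w)" by blast
  moreover have "\<forall>f\<in>fock. (\<lambda>w. X f w + Y f w) \<in> fock" using assms unfolding good_def by (auto intro!: fock_add)
  ultimately show ?thesis unfolding good_def by blast
qed

lemma good_scale: assumes "good X" shows "good (\<lambda>f w. c * X f w)"
proof -
  obtain S where S: "S \<in> star_alg_L" "\<forall>f\<in>fock. S f = X f"
    using assms unfolding good_def by blast
  have "op_scale c S \<in> star_alg_L" using S by (intro star_alg_L.scale)
  moreover have "\<forall>f\<in>fock. op_scale c S f = (\<lambda>w. c * X f w)" using S by (auto simp: op_scale_def)
  ultimately have "\<exists>S\<in>star_alg_L. \<forall>f\<in>fock. S f = (\<lambda>w. c * X f w)" by blast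
  moreover have "\<forall>f\<in>fock. (\<lambda>w. c * X f w) \<in> fock" using assms fock_scale unfolding good_def by auto
  ultimately show ?thesis unfolding good_def by blast
qed

lemma good_cong: "good X \<Longrightarrow> (\<And>f. f \<in> fock \<Longrightarrow> Y f = X f) \<Longrightarrow> good Y"
  unfolding good_def by auto

lemma good_zero: "good (\<lambda>f w. 0)"
  using good_scale[OF good_create, of 0] by simp

lemma good_sum:
  assumes "finite I" "\<And>i. i \<in> I \<Longrightarrow> good (X i)"
  shows "good (\<lambda>f w. \<Sum>i\<in>I. c i * X i f w)"
  using assms
proof (induction I rule: finite_induct)
  case empty then show ?case by (simp add: good_zero)
next
  case (insert x F)
  have "good (\<lambda>f w. c x * X x f w + (\<Sum>i\<in>F. c i * X i f w))"
    using insert by (intro good_add good_scale) auto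
  then show ?case using insert by simp
qed




definition Lw :: "'d list \<Rightarrow> 'd op" where
  "Lw u f = (\<lambda>w. if take (length u) w = u then f (drop (length u) w) else 0)"

definition Aw :: "'d list \<Rightarrow> 'd op" where
  "Aw v f = (\<lambda>w. f (v @ w))"

definition Pv :: "'d op" where
  "Pv f = (\<lambda>w. if w = [] then f [] else 0)"

lemma good_id: "good (\<lambda>f. f)"
proof (rule good_cong[OF good_comp[OF good_ann good_create, of undefined undefined]])
  fix f :: "'a vec"
  show "f = (ann undefined \<circ> create undefined) f"
    by (auto simp: ann_def create_def)
qed

lemma good_Lw: "good (Lw u)"
proof (induction u)
  case Nil
  show ?case by (rule good_cong[OF good_id]) (simp add: Lw_def)
next
  case (Cons j u)
  show ?case
  proof (rule good_cong[OF good_comp[OF good_create Cons.IH, of j]])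
    fix f :: "'a vec"
    show "Lw (j # u) f = (create j \<circ> Lw u) f"
      by (auto simp: Lw_def create_def split: list.splits)
  qed
qed

lemma good_Aw: "good (Aw v)"
proof (induction v)
  case Nil
  show ?case by (rule good_cong[OF good_id]) (simp add: Aw_def)
next
  case (Cons j v)
  show ?case
  proof (rule good_cong[OF good_comp[OF Cons.IH good_ann, of j]])
    fix f :: "'a vec"
    show "Aw (j # v) f = (Aw v \<circ> ann j) f"
      by (auto simp: Aw_def ann_def)
  qed
qed

lemma sum_create_ann:
  "(\<Sum>j\<in>UNIV. create j (ann j f) w) = (if w = [] then 0 else ((f::('d::finite) vec) w))"
proof (cases w)
  case Nil then show ?thesis by (simp add: create_def)
next
  case (Cons i w')
  have "(\<Sum>j\<in>UNIV. create j (ann j f) w) = (\<Sum>j\<in>UNIV. if i = j then f (i # w') else 0)"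
    by (rule sum.cong) (auto simp: Cons create_def ann_def)
  then show ?thesis by (simp add: Cons sum.delta sum.delta')
qed

lemma good_Pv: "good (Pv :: ('d::finite) op)"
proof -
  have g1: "good (\<lambda>f w. (\<Sum>j\<in>(UNIV::'d set). 1 * create j (ann j f) w))"
    by (rule good_sum) (auto intro: good_comp[OF good_create good_ann, unfolded o_def])
  have "good (\<lambda>f w. f w + (-1) * (\<Sum>j\<in>(UNIV::'d set). 1 * create j (ann j f) w))"
    by (rule good_add[OF good_id good_scale[OF g1]])
  then show ?thesis
    by (rule good_cong) (auto simp add: Pv_def sum_create_ann)
qed

definition Euv :: "'d list \<Rightarrow> 'd list \<Rightarrow> 'd op" where
  "Euv u v f = (\<lambda>w. if w = u then f v else 0)"

definition Fuv :: "'d list \<Rightarrow> 'd list \<Rightarrow> 'd op" where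
  "Fuv u v f = (\<lambda>w. if take (length u) w = u then f (v @ drop (length u) w) else 0)"

lemma good_Euv: "good (Euv u (v::('d::finite) list))"
proof (rule good_cong[OF good_comp[OF good_comp[OF good_Lw good_Pv] good_Aw, of u v]])
  fix f :: "'d vec"
  show "Euv u v f = (Lw u \<circ> Pv \<circ> Aw v) f"
  proof
    fix w :: "'d list"
    show "Euv u v f w = (Lw u \<circ> Pv \<circ> Aw v) f w"
    proof (cases "w = u")
      case True
      then show ?thesis by (simp add: Euv_def Lw_def Pv_def Aw_def)
    next
      case False
      have "\<not> (take (length u) w = u \<and> drop (length u) w = [])"
      proof
        assume "take (length u) w = u \<and> drop (length u) w = []"
        then have "w = u @ []" by (metis append_take_drop_id)
        with False show False by simp
      qed
      then show ?thesis using False by (simp add: Euv_def Lw_def Pv_def Aw_def)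
    qed
  qed
qed

lemma good_Fuv: "good (Fuv u (v::('d::finite) list))"
proof (rule good_cong[OF good_comp[OF good_Lw good_Aw, of u v]])
  fix f :: "'d vec"
  show "Fuv u v f = (Lw u \<circ> Aw v) f"
    by (auto simp: Fuv_def Lw_def Aw_def)
qed




lemma fock_sum:
  assumes "finite A" "\<And>v. v \<in> A \<Longrightarrow> g v \<in> fock"
  shows "(\<lambda>w. \<Sum>v\<in>A. c v * g v w) \<in> fock"
  using assms
proof (induction A rule: finite_induct)
  case empty then show ?case by simp
next
  case (insert x F)
  have "(\<lambda>w. c x * g x w + (\<Sum>v\<in>F. c v * g v w)) \<in> fock"
    using insert by (intro fock_add fock_scale) auto
  then show ?case using insert by simp
qed

lemma finite_len_less[simp]: "finite {x::('d::finite) list. length x < M}"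
proof -
  have "{x::'d list. length x < M} \<subseteq> {xs. set xs \<subseteq> UNIV \<and> length xs \<le> M}" by auto
  then show ?thesis using finite_lists_length_le[of "UNIV::'d set" M] finite_subset by auto
qed

lemma tail_small:
  assumes "f \<in> fock" "e > 0"
  shows "\<exists>M. \<forall>M'\<ge>M. fnorm (\<lambda>x. if M' \<le> length x then f x else 0) < e"
proof -
  define g where "g = (\<lambda>w. (cmod (f w))\<^sup>2)"
  have s: "g summable_on UNIV" using assms(1) by (simp add: fock_def g_def)
  have e2: "e\<^sup>2 / 2 > 0" using assms(2) by simp
  obtain F where F: "finite F" "dist (sum g F) (infsum g UNIV) \<le> e\<^sup>2 / 2"
    using infsum_finite_approximation[OF s e2] by blast
  define M where "M = Suc (Max (insert 0 (length ` F)))"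
  have FM: "\<And>x. x \<in> F \<Longrightarrow> length x < M"
    using F(1) unfolding M_def by (simp add: le_imp_less_Suc)
  show ?thesis
  proof (intro exI allI impI)
    fix M' assume "M \<le> M'"
    define X where "X = {x::'a list. M' \<le> length x}"
    have FX: "F \<subseteq> UNIV - X" using FM \<open>M \<le> M'\<close> unfolding X_def by fastforce
    have sX: "g summable_on X" by (rule summable_on_subset[OF s]) auto
    have sY: "g summable_on (UNIV - X)" by (rule summable_on_subset[OF s]) auto
    have "infsum g ((UNIV - X) \<union> X) = infsum g (UNIV - X) + infsum g X"
      by (rule infsum_Un_disjoint[OF sY sX]) auto
    then have "infsum g UNIV = infsum g (UNIV - X) + infsum g X" by simp
    moreover have "sum g F \<le> infsum g (UNIV - X)"
      by (rule finite_sum_le_infsum[OF sY F(1) FX]) (simp add: g_def)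
    moreover have "infsum g UNIV - sum g F \<le> e\<^sup>2 / 2" using F(2) unfolding dist_real_def by linarith
    ultimately have iX: "infsum g X \<le> e\<^sup>2 / 2" by linarith
    have "(\<Sum>\<^sub>\<infinity>x. (cmod (if M' \<le> length x then f x else 0))\<^sup>2) = infsum g X"
      by (rule infsum_cong_neutral) (auto simp: X_def g_def)
    then have "fnorm (\<lambda>x. if M' \<le> length x then f x else 0) = sqrt (infsum g X)"
      by (simp add: fnorm_def)
    also have "\<dots> \<le> sqrt (e\<^sup>2 / 2)" using iX by simp
    also have "\<dots> < sqrt (e\<^sup>2)" using e2 by (simp del: real_sqrt_abs)
    also have "\<dots> = e" using assms(2) by simp
    finally show "fnorm (\<lambda>x. if M' \<le> length x then f x else 0) < e" .
  qed
qed

lemma fock_restrict: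
  assumes "f \<in> fock"
  shows "(\<lambda>x. if P x then f x else 0) \<in> fock"
proof -
  have "(\<lambda>w. (cmod (f w))\<^sup>2) summable_on UNIV" using assms by (simp add: fock_def)
  then have "(\<lambda>w. (cmod (if P w then f w else 0))\<^sup>2) summable_on UNIV"
    by (rule summable_on_comparison_test) auto
  then show ?thesis by (simp add: fock_def)
qed

locale Tctx =
  fixes T :: "('d::finite) op"
  assumes bT: "bounded_op T" and bd: "block_diagonal T"
begin

lemma T_fock: "f \<in> fock \<Longrightarrow> T f \<in> fock"
  using bT unfolding bounded_op_def by blast

lemma T_lin: "f \<in> fock \<Longrightarrow> g \<in> fock \<Longrightarrow> T (\<lambda>w. a * f w + b * g w) = (\<lambda>w. a * T f w + b * T g w)"
  using bT unfolding bounded_op_def by blast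

lemma T_bound: "\<exists>C\<ge>0. \<forall>f\<in>fock. fnorm (T f) \<le> C * fnorm f"
proof -
  obtain C where C: "\<forall>f\<in>fock. fnorm (T f) \<le> C * fnorm f" using bT unfolding bounded_op_def by blast
  have "\<forall>f\<in>fock. fnorm (T f) \<le> \<bar>C\<bar> * fnorm f"
  proof
    fix f :: "'d vec" assume "f \<in> fock"
    then have "fnorm (T f) \<le> C * fnorm f" using C by blast
    also have "\<dots> \<le> \<bar>C\<bar> * fnorm f" by (rule mult_right_mono) (auto simp: fnorm_nonneg)
    finally show "fnorm (T f) \<le> \<bar>C\<bar> * fnorm f" .
  qed
  then show ?thesis by (intro exI[of _ "\<bar>C\<bar>"]) auto
qed

lemma T_scale: "f \<in> fock \<Longrightarrow> T (\<lambda>w. c * f w) = (\<lambda>w. c * T f w)"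
  using T_lin[of f f c 0] by simp

lemma T_add: "f \<in> fock \<Longrightarrow> g \<in> fock \<Longrightarrow> T (\<lambda>w. f w + g w) = (\<lambda>w. T f w + T g w)"
  using T_lin[of f g 1 1] by simp

lemma T_zero: "T (\<lambda>w. 0) = (\<lambda>w. 0)"
  using T_scale[of "\<lambda>w. 0" 0] by simp

lemma T_sum:
  assumes "finite A" "\<And>v. v \<in> A \<Longrightarrow> g v \<in> fock"
  shows "T (\<lambda>w. \<Sum>v\<in>A. c v * g v w) = (\<lambda>w. \<Sum>v\<in>A. c v * T (g v) w)"
  using assms
proof (induction A rule: finite_induct)
  case empty then show ?case by (simp add: T_zero)
next
  case (insert x F)
  have f1: "(\<lambda>w. \<Sum>v\<in>F. c v * g v w) \<in> fock" using insert by (intro fock_sum) auto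
  have "T (\<lambda>w. c x * g x w + 1 * (\<Sum>v\<in>F. c v * g v w)) =
        (\<lambda>w. c x * T (g x) w + 1 * T (\<lambda>w. \<Sum>v\<in>F. c v * g v w) w)"
    using insert f1 by (intro T_lin) auto
  then show ?case using insert by simp
qed

lemma T_expand:
  assumes "finite A" "\<And>w. w \<notin> A \<Longrightarrow> h w = 0"
  shows "T h u = (\<Sum>v\<in>A. h v * T (delta v) u)"
proof -
  have "h = (\<lambda>w. \<Sum>v\<in>A. h v * delta v w)"
  proof
    fix w
    have "(\<Sum>v\<in>A. h v * delta v w) = (\<Sum>v\<in>A. if w = v then h w else 0)"
      by (rule sum.cong) (auto simp: delta_def)
    also have "\<dots> = h w" using assms by (simp add: sum.delta)
    finally show "h w = (\<Sum>v\<in>A. h v * delta v w)" by simp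
  qed
  then have "T h = (\<lambda>w. \<Sum>v\<in>A. h v * T (delta v) w)"
    using T_sum[OF assms(1), of delta h] delta_fock by metis
  then show ?thesis by simp
qed

lemma T_delta_block: "length u \<noteq> length v \<Longrightarrow> T (delta v) u = 0"
proof -
  assume "length u \<noteq> length v"
  have "delta v \<in> fock_n (length v)" by (simp add: fock_n_iff delta_def)
  then have "T (delta v) \<in> fock_n (length v)" using bd unfolding block_diagonal_def by blast
  then show ?thesis using \<open>length u \<noteq> length v\<close> by (simp add: fock_n_iff)
qed

lemma T_block: "f \<in> fock_n n \<Longrightarrow> T f \<in> fock_n n"
  using bd unfolding block_diagonal_def by blast

lemma T_local:
  assumes f: "f \<in> fock"
  shows "T f w = T (\<lambda>x. if length x = length w then f x else 0) w"
proof -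
  obtain C where C: "C \<ge> 0" "\<forall>f\<in>fock. fnorm (T f) \<le> C * fnorm f" using T_bound by blast
  define r where "r = (\<lambda>x. if length x = length w then f x else 0)"
  have "cmod (T f w - T r w) \<le> e" if e: "e > 0" for e
  proof -
    have "e / (C + 1) > 0" using e C by simp
    then obtain M0 where M0: "\<And>M'. M' \<ge> M0 \<Longrightarrow> fnorm (\<lambda>x. if M' \<le> length x then f x else 0) < e / (C + 1)"
      using tail_small[OF f] by blast
    define M where "M = max M0 (Suc (length w))"
    define tl where "tl = (\<lambda>x. if M \<le> length x then f x else 0)"
    define hd where "hd = (\<lambda>x. if length x < M then f x else 0)"
    have tl_f: "tl \<in> fock" unfolding tl_def by (rule fock_restrict[OF f])
    have hd_f: "hd \<in> fock" unfolding hd_def by (rule fock_restrict[OF f])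
    have "f = (\<lambda>x. hd x + tl x)" by (auto simp: hd_def tl_def)
    then have Tf: "T f w = T hd w + T tl w" using T_add[OF hd_f tl_f] by metis
    have wM: "length w < M" by (simp add: M_def)
    have "T hd w = (\<Sum>v\<in>{x. length x < M}. hd v * T (delta v) w)"
      by (rule T_expand) (auto simp: hd_def)
    also have "\<dots> = (\<Sum>v\<in>{x. length x < M}. r v * T (delta v) w)"
      by (rule sum.cong) (auto simp: hd_def r_def T_delta_block wM)
    also have "\<dots> = T r w"
      by (rule T_expand[symmetric]) (auto simp: r_def wM)
    finally have "T f w - T r w = T tl w" using Tf by simp
    then have "cmod (T f w - T r w) \<le> fnorm (T tl)" using point_le_fnorm[OF T_fock[OF tl_f]] by simp
    also have "\<dots> \<le> C * fnorm tl" using C tl_f by blast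
    also have "\<dots> \<le> C * (e / (C + 1))"
      using M0[of M] C(1) by (intro mult_left_mono) (auto simp: M_def tl_def)
    also have "\<dots> \<le> e" using C(1) e by (simp add: field_simps)
    finally show ?thesis .
  qed
  then have "cmod (T f w - T r w) = 0"
    by (metis dual_order.antisym field_lbound_gt_zero norm_ge_zero linorder_not_le)
  then show ?thesis by (simp add: r_def)
qed

end




definition tens :: "nat \<Rightarrow> 'd op \<Rightarrow> 'd op" where
  "tens m X g = (\<lambda>w. X (\<lambda>v. if length v = m then g (v @ drop m w) else 0) (take m w))"

lemma sum_W_split:
  "(\<Sum>w\<in>W (m + r). F w) = (\<Sum>u\<in>(W m :: ('d::finite) list set). \<Sum>z\<in>W r. F (u @ z))"
proof -
  have img: "W (m + r) = (\<lambda>(u, z). u @ z) ` (W m \<times> (W r :: 'd list set))"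
  proof
    show "W (m + r) \<subseteq> (\<lambda>(u, z). u @ z) ` (W m \<times> (W r :: 'd list set))"
    proof
      fix w :: "'d list" assume "w \<in> W (m + r)"
      then have "w = (\<lambda>(u, z). u @ z) (take m w, drop m w)" "(take m w, drop m w) \<in> W m \<times> W r"
        by (auto simp: W_def)
      then show "w \<in> (\<lambda>(u, z). u @ z) ` (W m \<times> (W r :: 'd list set))" by blast
    qed
  qed (auto simp: W_def)
  have inj: "inj_on (\<lambda>(u, z). u @ z) (W m \<times> (W r :: 'd list set))"
    by (auto simp: inj_on_def W_def)
  have "(\<Sum>w\<in>W (m + r). F w) = (\<Sum>p\<in>W m \<times> W r. F ((\<lambda>(u, z). u @ z) p))"
    unfolding img by (rule sum.reindex[OF inj, unfolded o_def])
  also have "\<dots> = (\<Sum>u\<in>W m. \<Sum>z\<in>W r. F (u @ z))"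
    by (simp add: sum.cartesian_product split_def)
  finally show ?thesis .
qed

lemma L2_sq: "finite A \<Longrightarrow> (L2_set f A)\<^sup>2 = (\<Sum>x\<in>A. (f x)\<^sup>2)"
  unfolding L2_set_def by (simp add: sum_nonneg)

lemma L2_le_sq: "L2_set f A \<le> c * L2_set g A \<Longrightarrow> 0 \<le> c \<Longrightarrow> finite A \<Longrightarrow>
   (\<Sum>x\<in>A. (f x)\<^sup>2) \<le> c\<^sup>2 * (\<Sum>x\<in>A. (g x)\<^sup>2)"
proof -
  assume a: "L2_set f A \<le> c * L2_set g A" "0 \<le> c" "finite A"
  have "(L2_set f A)\<^sup>2 \<le> (c * L2_set g A)\<^sup>2" by (rule power_mono[OF a(1)]) simp
  then show ?thesis using a by (simp add: L2_sq power_mult_distrib)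
qed

lemma sq_le_L2: "(\<Sum>x\<in>A. (f x)\<^sup>2) \<le> c\<^sup>2 * (\<Sum>x\<in>A. (g x)\<^sup>2) \<Longrightarrow> 0 \<le> c \<Longrightarrow>
   L2_set f A \<le> c * L2_set g A"
proof -
  assume a: "(\<Sum>x\<in>A. (f x)\<^sup>2) \<le> c\<^sup>2 * (\<Sum>x\<in>A. (g x)\<^sup>2)" "0 \<le> c"
  have "L2_set f A \<le> sqrt (c\<^sup>2 * (\<Sum>x\<in>A. (g x)\<^sup>2))" unfolding L2_set_def using a(1) by simp
  also have "\<dots> = c * L2_set g A" using a(2) by (simp add: L2_set_def real_sqrt_mult)
  finally show ?thesis .
qed

lemma tensor_bound:
  fixes X :: "('d::finite) op"
  assumes hyp: "\<And>h. h \<in> fock_n m \<Longrightarrow>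
      L2_set (\<lambda>u. cmod (X h u)) (W m) \<le> c * L2_set (\<lambda>u. cmod (h u)) (W m)"
    and c: "0 \<le> c"
  shows "L2_set (\<lambda>w. cmod (tens m X g w)) (W (m + r)) \<le> c * L2_set (\<lambda>w. cmod (g w)) (W (m + r))"
proof (rule sq_le_L2[OF _ c])
  define gz where "gz z = (\<lambda>v. if length v = m then g (v @ z) else 0)" for z
  have gzn: "gz z \<in> fock_n m" for z by (simp add: fock_n_iff gz_def)
  have tz: "tens m X g (u @ z) = X (gz z) u" if "u \<in> W m" for u z
  proof -
    have d: "drop m (u @ z) = z" and t: "take m (u @ z) = u" using that by (auto simp: W_def)
    show ?thesis unfolding tens_def gz_def by (simp only: d t)
  qed
  have "(\<Sum>w\<in>W (m + r). (cmod (tens m X g w))\<^sup>2) = (\<Sum>u\<in>W m. \<Sum>z\<in>W r. (cmod (X (gz z) u))\<^sup>2)"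
    by (simp add: sum_W_split tz)
  also have "\<dots> = (\<Sum>z\<in>W r. \<Sum>u\<in>W m. (cmod (X (gz z) u))\<^sup>2)"
    by (rule sum.swap)
  also have "\<dots> \<le> (\<Sum>z\<in>W r. c\<^sup>2 * (\<Sum>u\<in>W m. (cmod (gz z u))\<^sup>2))"
    by (rule sum_mono, rule L2_le_sq[OF hyp[OF gzn] c]) simp
  also have "\<dots> = c\<^sup>2 * (\<Sum>u\<in>W m. \<Sum>z\<in>W r. (cmod (g (u @ z)))\<^sup>2)"
    by (simp add: sum_distrib_left gz_def W_def, rule sum.swap)
  also have "\<dots> = c\<^sup>2 * (\<Sum>w\<in>W (m + r). (cmod (g w))\<^sup>2)"
    by (simp add: sum_W_split)
  finally show "(\<Sum>w\<in>W (m + r). (cmod (tens m X g w))\<^sup>2) \<le> c\<^sup>2 * (\<Sum>w\<in>W (m + r). (cmod (g w))\<^sup>2)" .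
qed

lemma opnorm_use:
  fixes B :: "('d::finite) op"
  assumes sc: "\<And>h c. h \<in> fock_n n \<Longrightarrow> B (\<lambda>w. c * h w) = (\<lambda>w. c * B h w)"
    and supp: "\<And>h w. h \<in> fock_n n \<Longrightarrow> length w \<noteq> n \<Longrightarrow> B h w = 0"
    and bnd: "\<And>h. h \<in> fock_n n \<Longrightarrow>
       L2_set (\<lambda>w. cmod (B h w)) (W n) \<le> K * L2_set (\<lambda>w. cmod (h w)) (W n)"
  shows "0 \<le> opnorm_on (fock_n n) B"
    and "\<And>h. h \<in> fock_n n \<Longrightarrow>
       L2_set (\<lambda>w. cmod (B h w)) (W n) \<le> opnorm_on (fock_n n) B * L2_set (\<lambda>w. cmod (h w)) (W n)"
proof -
  define Q where "Q = {fnorm (B f) | f. f \<in> fock_n n \<and> fnorm f \<le> 1}"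
  have fnB: "fnorm (B h) = L2_set (\<lambda>w. cmod (B h w)) (W n)" if "h \<in> fock_n n" for h
    by (rule fnorm_fin) (auto simp: W_def supp[OF that])
  have zn: "(\<lambda>w. 0) \<in> (fock_n n :: 'd vec set)" by (simp add: fock_n_iff)
  have B0: "B (\<lambda>w. 0) = (\<lambda>w. 0)" using sc[OF zn, of 0] by simp
  have bdd: "bdd_above Q"
  proof (rule bdd_aboveI)
    fix x assume "x \<in> Q"
    then obtain f where f: "f \<in> fock_n n" "fnorm f \<le> 1" "x = fnorm (B f)" unfolding Q_def by blast
    have "x \<le> K * fnorm f" using f bnd[OF f(1)] fnB[OF f(1)] fnorm_n[OF f(1)] by simp
    also have "\<dots> \<le> \<bar>K\<bar> * fnorm f" by (rule mult_right_mono) (auto simp: fnorm_nonneg)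
    also have "\<dots> \<le> \<bar>K\<bar>" using f(2) by (simp add: mult_left_le)
    finally show "x \<le> \<bar>K\<bar>" .
  qed
  have "fnorm (B (\<lambda>w. 0)) \<in> Q" unfolding Q_def using zn by (auto simp: fnorm_def)
  then have "fnorm (B (\<lambda>w. 0)) \<le> Sup Q" using bdd by (rule cSup_upper)
  then show nn: "0 \<le> opnorm_on (fock_n n) B" unfolding opnorm_on_def Q_def[symmetric] B0
    by (simp add: fnorm_def)
  fix h :: "'d vec" assume h: "h \<in> fock_n n"
  define r where "r = L2_set (\<lambda>w. cmod (h w)) (W n)"
  show "L2_set (\<lambda>w. cmod (B h w)) (W n) \<le> opnorm_on (fock_n n) B * r"
  proof (cases "r = 0")
    case True
    then have "\<forall>w\<in>W n. cmod (h w) = 0" unfolding r_def by (simp add: L2_set_eq_0_iff)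
    then have "h = (\<lambda>w. 0)" using h by (auto simp: W_def fock_n_iff)
    then show ?thesis using B0 True by (simp add: L2_set_0')
  next
    case False
    then have rp: "r > 0" unfolding r_def using L2_set_nonneg[of _ "W n"] by (simp add: less_le)
    define h' where "h' = (\<lambda>w. complex_of_real (1 / r) * h w)"
    have h'n: "h' \<in> fock_n n" using h by (simp add: fock_n_iff h'_def)
    have "fnorm h' = L2_set (\<lambda>w. (1 / r) * cmod (h w)) (W n)"
      using fnorm_n[OF h'n] rp by (simp add: h'_def norm_mult norm_divide)
    also have "\<dots> = (1 / r) * L2_set (\<lambda>w. cmod (h w)) (W n)"
      by (rule L2_set_right_distrib[symmetric]) (use rp in simp)
    also have "\<dots> = 1" using rp by (simp add: r_def)
    finally have "fnorm (B h') \<in> Q" unfolding Q_def using h'n by auto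
    then have "fnorm (B h') \<le> opnorm_on (fock_n n) B" unfolding opnorm_on_def Q_def[symmetric]
      using bdd by (rule cSup_upper)
    moreover have "fnorm (B h') = (1 / r) * L2_set (\<lambda>w. cmod (B h w)) (W n)"
    proof -
      have "B h' = (\<lambda>w. complex_of_real (1 / r) * B h w)" unfolding h'_def by (rule sc[OF h])
      then have "fnorm (B h') = L2_set (\<lambda>w. (1 / r) * cmod (B h w)) (W n)"
        using fnB[OF h'n] rp by (simp only: norm_mult norm_of_real) simp
      also have "\<dots> = (1 / r) * L2_set (\<lambda>w. cmod (B h w)) (W n)"
        by (rule L2_set_right_distrib[symmetric]) (use rp in simp)
      finally show ?thesis .
    qed
    ultimately show ?thesis using rp by (simp add: field_simps)
  qed
qed




lemma L2_add: "L2_set (\<lambda>w. cmod (a w + b w)) A \<le> L2_set (\<lambda>w. cmod (a w)) A + L2_set (\<lambda>w. cmod (b w)) A"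
proof -
  have "L2_set (\<lambda>w. cmod (a w + b w)) A \<le> L2_set (\<lambda>w. cmod (a w) + cmod (b w)) A"
    by (rule L2_set_mono) (auto simp: norm_triangle_ineq)
  also have "\<dots> \<le> L2_set (\<lambda>w. cmod (a w)) A + L2_set (\<lambda>w. cmod (b w)) A"
    by (rule L2_set_triangle_ineq)
  finally show ?thesis .
qed

lemma L2_diff: "L2_set (\<lambda>w. cmod (a w - b w)) A \<le> L2_set (\<lambda>w. cmod (a w)) A + L2_set (\<lambda>w. cmod (b w)) A"
  using L2_add[of a "\<lambda>w. - b w" A] by simp

lemma L2_sum:
  assumes "finite I"
  shows "L2_set (\<lambda>w. cmod (\<Sum>i\<in>I. F i w)) A \<le> (\<Sum>i\<in>I. L2_set (\<lambda>w. cmod (F i w)) A)"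
  using assms
proof (induction I rule: finite_induct)
  case empty then show ?case by (simp add: L2_set_0')
next
  case (insert x I)
  have "L2_set (\<lambda>w. cmod (\<Sum>i\<in>insert x I. F i w)) A = L2_set (\<lambda>w. cmod (F x w + (\<Sum>i\<in>I. F i w))) A"
    using insert by simp
  also have "\<dots> \<le> L2_set (\<lambda>w. cmod (F x w)) A + L2_set (\<lambda>w. cmod (\<Sum>i\<in>I. F i w)) A"
    by (rule L2_add)
  also have "\<dots> \<le> L2_set (\<lambda>w. cmod (F x w)) A + (\<Sum>i\<in>I. L2_set (\<lambda>w. cmod (F i w)) A)"
    using insert by simp
  finally show ?case using insert by simp
qed

lemma last_butlast_len: "length w = Suc m \<Longrightarrow> drop m w = [last w] \<and> take m w = butlast w"
proof -
  assume l: "length w = Suc m"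
  then have "w \<noteq> []" by auto
  then have w: "w = butlast w @ [last w]" by simp
  have lb: "length (butlast w) = m" using l by simp
  have "drop m (butlast w @ [last w]) = [last w]" "take m (butlast w @ [last w]) = butlast w"
    using lb by simp_all
  then show ?thesis using w by metis
qed

lemma tensor_id_tens: "length w = Suc m \<Longrightarrow> tensor_id m T f w = tens m T f w"
proof -
  assume l: "length w = Suc m"
  have d: "drop m w = [last w]" and t: "take m w = butlast w" using last_butlast_len[OF l] by auto
  show ?thesis unfolding tensor_id_def tens_def d t using l by simp
qed

context Tctx begin

lemma T_hyp:
  obtains C where "C \<ge> 0" "\<And>h m. h \<in> fock_n m \<Longrightarrow>
      L2_set (\<lambda>u. cmod (T h u)) (W m) \<le> C * L2_set (\<lambda>u. cmod (h u)) (W m)"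
proof -
  obtain C where C: "C \<ge> 0" "\<forall>f\<in>fock. fnorm (T f) \<le> C * fnorm f" using T_bound by blast
  have "L2_set (\<lambda>u. cmod (T h u)) (W m) \<le> C * L2_set (\<lambda>u. cmod (h u)) (W m)" if h: "h \<in> fock_n m" for h m
  proof -
    have "h \<in> fock" using h by (simp add: fock_n_def)
    then have "fnorm (T h) \<le> C * fnorm h" using C by blast
    then show ?thesis using fnorm_n[OF h] fnorm_n[OF T_block[OF h]] by simp
  qed
  with C(1) show ?thesis by (rule that)
qed

definition Bm :: "nat \<Rightarrow> 'd op" where
  "Bm m = op_diff T (tensor_id m T)"

lemma Bm_props:
  shows "0 \<le> opnorm_on (fock_n (Suc m)) (Bm m)"
    and "\<And>h. h \<in> fock_n (Suc m) \<Longrightarrow>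
       L2_set (\<lambda>w. cmod (Bm m h w)) (W (Suc m)) \<le> opnorm_on (fock_n (Suc m)) (Bm m) * L2_set (\<lambda>w. cmod (h w)) (W (Suc m))"
proof -
  obtain C where C: "C \<ge> 0" "\<And>h m. h \<in> fock_n m \<Longrightarrow>
      L2_set (\<lambda>u. cmod (T h u)) (W m) \<le> C * L2_set (\<lambda>u. cmod (h u)) (W m)" using T_hyp by blast
  have sc: "Bm m (\<lambda>w. c * h w) = (\<lambda>w. c * Bm m h w)" if h: "h \<in> fock_n (Suc m)" for h c
  proof -
    have hf: "h \<in> fock" using h by (simp add: fock_n_def)
    have inner: "(\<lambda>v. if length v = m then c * h (v @ [last w]) else 0) =
                 (\<lambda>v. c * (if length v = m then h (v @ [last w]) else 0))" for w by auto
    have inf: "(\<lambda>v. if length v = m then h (v @ [last w]) else 0) \<in> fock" for w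
    proof -
      have "(\<lambda>v. if length v = m then h (v @ [last w]) else 0) \<in> fock_n m" by (simp add: fock_n_iff)
      then show ?thesis by (simp add: fock_n_def)
    qed
    have tc: "tensor_id m T (\<lambda>w. c * h w) w = c * tensor_id m T h w" for w
    proof (cases "length w = Suc m")
      case True
      have "tensor_id m T (\<lambda>w. c * h w) w = T (\<lambda>v. c * (if length v = m then h (v @ [last w]) else 0)) (butlast w)"
        unfolding tensor_id_def using True by (simp add: inner)
      also have "\<dots> = c * T (\<lambda>v. if length v = m then h (v @ [last w]) else 0) (butlast w)"
        by (simp add: T_scale[OF inf])
      finally show ?thesis unfolding tensor_id_def using True by simp
    next
      case False then show ?thesis by (simp add: tensor_id_def)
    qed
    show ?thesis
    proof
      fix w
      show "Bm m (\<lambda>w. c * h w) w = c * Bm m h w"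
        unfolding Bm_def op_diff_def tc by (simp add: T_scale[OF hf] right_diff_distrib)
    qed
  qed
  have supp: "Bm m h w = 0" if h: "h \<in> fock_n (Suc m)" and l: "length w \<noteq> Suc m" for h w
    using T_block[OF h] l by (simp add: Bm_def op_diff_def tensor_id_def fock_n_iff)
  have bnd: "L2_set (\<lambda>w. cmod (Bm m h w)) (W (Suc m)) \<le> (2 * C) * L2_set (\<lambda>w. cmod (h w)) (W (Suc m))"
    if h: "h \<in> fock_n (Suc m)" for h
  proof -
    have "L2_set (\<lambda>w. cmod (Bm m h w)) (W (Suc m)) \<le>
          L2_set (\<lambda>w. cmod (T h w)) (W (Suc m)) + L2_set (\<lambda>w. cmod (tensor_id m T h w)) (W (Suc m))"
      unfolding Bm_def op_diff_def by (rule L2_diff)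
    also have "L2_set (\<lambda>w. cmod (tensor_id m T h w)) (W (Suc m)) = L2_set (\<lambda>w. cmod (tens m T h w)) (W (m + 1))"
      by (rule L2_set_cong) (auto simp: W_def tensor_id_tens)
    also have "\<dots> \<le> C * L2_set (\<lambda>w. cmod (h w)) (W (m + 1))"
      by (rule tensor_bound[OF C(2) C(1)])
    finally show ?thesis using C(2)[OF h] by simp
  qed
  show "0 \<le> opnorm_on (fock_n (Suc m)) (Bm m)"
    by (rule opnorm_use(1)[OF sc supp bnd]) auto
  show "\<And>h. h \<in> fock_n (Suc m) \<Longrightarrow>
       L2_set (\<lambda>w. cmod (Bm m h w)) (W (Suc m)) \<le> opnorm_on (fock_n (Suc m)) (Bm m) * L2_set (\<lambda>w. cmod (h w)) (W (Suc m))"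
    by (rule opnorm_use(2)[OF sc supp bnd]) auto
qed

end




lemma group_len:
  "(\<Sum>x\<in>{x::('d::finite) list. length x < K}. F x) = (\<Sum>k<K. \<Sum>w\<in>W k. F w)"
proof (induction K)
  case 0 then show ?case by simp
next
  case (Suc K)
  have e: "{x::'d list. length x < Suc K} = {x. length x < K} \<union> W K" by (auto simp: W_def)
  have "(\<Sum>x\<in>{x::'d list. length x < Suc K}. F x) = (\<Sum>x\<in>{x::'d list. length x < K}. F x) + (\<Sum>w\<in>W K. F w)"
    unfolding e by (rule sum.union_disjoint) (auto simp: W_def)
  then show ?case using Suc by simp
qed

context Tctx begin

lemma tens_full:
  assumes g: "g \<in> fock_n k" and l: "length w = k"
  shows "tens k T g w = T g w"
proof -
  have "(\<lambda>v. if length v = k then g (v @ drop k w) else 0) = g"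
    using g l by (auto simp: fock_n_iff)
  then show ?thesis using l by (simp add: tens_def)
qed

lemma tens_step:
  assumes g: "g \<in> fock_n k" and l: "length w = k" and mk: "m < k"
  shows "tens (Suc m) T g w - tens m T g w = tens (Suc m) (Bm m) g w"
proof -
  define u where "u = take (Suc m) w"
  define gz where "gz = (\<lambda>v. if length v = Suc m then g (v @ drop (Suc m) w) else 0)"
  have tu: "u = take m w @ [w ! m]" unfolding u_def using mk l by (simp add: take_Suc_conv_app_nth)
  have lu: "length u = Suc m" using tu mk l by simp
  have bu: "butlast u = take m w" and lau: "last u = w ! m" using tu by simp_all
  have dm: "drop m w = w ! m # drop (Suc m) w" using mk l by (simp add: Cons_nth_drop_Suc)
  have inner: "(\<lambda>v. if length v = m then gz (v @ [last u]) else 0) =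
               (\<lambda>v. if length v = m then g (v @ drop m w) else 0)"
    by (auto simp: gz_def lau dm)
  have "tensor_id m T gz u = tens m T g w"
    unfolding tensor_id_def tens_def using lu by (simp add: inner bu)
  moreover have "tens (Suc m) T g w = T gz u" by (simp add: tens_def gz_def u_def)
  moreover have "tens (Suc m) (Bm m) g w = T gz u - tensor_id m T gz u"
    by (simp add: tens_def gz_def u_def Bm_def op_diff_def)
  ultimately show ?thesis by simp
qed

lemma block_est:
  assumes g: "g \<in> fock_n k" and Nk: "N \<le> k"
  shows "L2_set (\<lambda>w. cmod (T g w - tens N T g w)) (W k) \<le>
         (\<Sum>m\<in>{N..<k}. opnorm_on (fock_n (Suc m)) (Bm m)) * L2_set (\<lambda>w. cmod (g w)) (W k)"
proof -
  have eq: "T g w - tens N T g w = (\<Sum>m\<in>{N..<k}. tens (Suc m) (Bm m) g w)" if w: "w \<in> W k" for w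
  proof -
    have lw: "length w = k" using w by (simp add: W_def)
    have "(\<Sum>m\<in>{N..<k}. tens (Suc m) (Bm m) g w) = (\<Sum>m\<in>{N..<k}. tens (Suc m) T g w - tens m T g w)"
      by (rule sum.cong) (auto simp: tens_step[OF g lw])
    also have "\<dots> = tens k T g w - tens N T g w" by (rule sum_Suc_diff'[OF Nk])
    finally show ?thesis using tens_full[OF g lw] by simp
  qed
  have "L2_set (\<lambda>w. cmod (T g w - tens N T g w)) (W k) =
        L2_set (\<lambda>w. cmod (\<Sum>m\<in>{N..<k}. tens (Suc m) (Bm m) g w)) (W k)"
    by (rule L2_set_cong) (auto simp: eq)
  also have "\<dots> \<le> (\<Sum>m\<in>{N..<k}. L2_set (\<lambda>w. cmod (tens (Suc m) (Bm m) g w)) (W k))"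
    by (rule L2_sum) simp
  also have "\<dots> \<le> (\<Sum>m\<in>{N..<k}. opnorm_on (fock_n (Suc m)) (Bm m) * L2_set (\<lambda>w. cmod (g w)) (W k))"
  proof (rule sum_mono)
    fix m assume m: "m \<in> {N..<k}"
    then have kk: "k = Suc m + (k - Suc m)" by auto
    show "L2_set (\<lambda>w. cmod (tens (Suc m) (Bm m) g w)) (W k) \<le>
          opnorm_on (fock_n (Suc m)) (Bm m) * L2_set (\<lambda>w. cmod (g w)) (W k)"
      by (subst (1 2) kk, rule tensor_bound[OF Bm_props(2) Bm_props(1)])
  qed
  also have "\<dots> = (\<Sum>m\<in>{N..<k}. opnorm_on (fock_n (Suc m)) (Bm m)) * L2_set (\<lambda>w. cmod (g w)) (W k)"
    by (simp add: sum_distrib_right)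
  finally show ?thesis .
qed

end




context Tctx begin

definition Sc :: "nat \<Rightarrow> 'd op" where
  "Sc N f w = (if length w < N then (\<Sum>v\<in>W (length w). T (delta v) w * f v)
     else (\<Sum>v\<in>W N. T (delta v) (take N w) * f (v @ drop N w)))"

lemma Sc_block:
  assumes g: "g \<in> fock_n k" and l: "length w = k"
  shows "Sc N g w = (if k < N then T g w else tens N T g w)"
proof (cases "k < N")
  case True
  have "T g w = (\<Sum>v\<in>W k. g v * T (delta v) w)"
    by (rule T_expand) (use g in \<open>auto simp: fock_n_iff W_def\<close>)
  then show ?thesis using True l by (simp add: Sc_def mult.commute)
next
  case False
  have "tens N T g w = (\<Sum>v\<in>W N. (if length v = N then g (v @ drop N w) else 0) * T (delta v) (take N w))"
    unfolding tens_def by (rule T_expand) (auto simp: W_def)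
  also have "\<dots> = (\<Sum>v\<in>W N. T (delta v) (take N w) * g (v @ drop N w))"
    by (rule sum.cong) (auto simp: W_def)
  finally show ?thesis using False l by (simp add: Sc_def)
qed

lemma Sc_local:
  assumes l: "length w = k"
  shows "Sc N f w = Sc N (\<lambda>x. if length x = k then f x else 0) w"
proof (cases "k < N")
  case True
  then show ?thesis using l unfolding Sc_def by (auto simp: W_def intro!: sum.cong)
next
  case False
  then show ?thesis using l unfolding Sc_def by (auto simp: W_def intro!: sum.cong)
qed

lemma good_Sc: "good (Sc N)"
proof -
  have g1: "good (\<lambda>f w. \<Sum>k\<in>{..<N}. 1 * (\<Sum>u\<in>W k. 1 * (\<Sum>v\<in>W k. T (delta v) u * Euv u v f w)))"
    by (intro good_sum good_Euv) auto
  have g2: "good (\<lambda>f w. \<Sum>u\<in>W N. 1 * (\<Sum>v\<in>W N. T (delta v) u * Fuv u v f w))"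
    by (intro good_sum good_Fuv) auto
  have g: "good (\<lambda>f w. (\<Sum>k\<in>{..<N}. 1 * (\<Sum>u\<in>W k. 1 * (\<Sum>v\<in>W k. T (delta v) u * Euv u v f w)))
       + (\<Sum>u\<in>W N. 1 * (\<Sum>v\<in>W N. T (delta v) u * Fuv u v f w)))"
    by (rule good_add[OF g1 g2])
  show ?thesis
  proof (rule good_cong[OF g])
    fix f :: "'d vec"
    show "Sc N f = (\<lambda>w. (\<Sum>k\<in>{..<N}. 1 * (\<Sum>u\<in>W k. 1 * (\<Sum>v\<in>W k. T (delta v) u * Euv u v f w)))
       + (\<Sum>u\<in>W N. 1 * (\<Sum>v\<in>W N. T (delta v) u * Fuv u v f w)))"
    proof
      fix w :: "'d list"
      have A: "(\<Sum>u\<in>W k. (\<Sum>v\<in>W k. T (delta v) u * Euv u v f w)) =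
               (if length w = k then (\<Sum>v\<in>W k. T (delta v) w * f v) else 0)" for k
      proof -
        have "(\<Sum>u\<in>W k. (\<Sum>v\<in>W k. T (delta v) u * Euv u v f w)) =
              (\<Sum>u\<in>W k. if u = w then (\<Sum>v\<in>W k. T (delta v) w * f v) else 0)"
          by (rule sum.cong) (auto simp: Euv_def)
        also have "\<dots> = (if length w = k then (\<Sum>v\<in>W k. T (delta v) w * f v) else 0)"
          by (simp add: sum.delta' W_def)
        finally show ?thesis .
      qed
      have P1: "(\<Sum>k\<in>{..<N}. 1 * (\<Sum>u\<in>W k. 1 * (\<Sum>v\<in>W k. T (delta v) u * Euv u v f w))) =
            (if length w < N then (\<Sum>v\<in>W (length w). T (delta v) w * f v) else 0)"
        by (simp add: A sum.delta' lessThan_iff)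
      have "(\<Sum>u\<in>W N. 1 * (\<Sum>v\<in>W N. T (delta v) u * Fuv u v f w)) =
            (\<Sum>u\<in>W N. if u = take N w then (\<Sum>v\<in>W N. T (delta v) (take N w) * f (v @ drop N w)) else 0)"
      proof (rule sum.cong[OF refl])
        fix u assume "u \<in> (W N :: 'd list set)"
        then have lu: "length u = N" by (simp add: W_def)
        show "1 * (\<Sum>v\<in>W N. T (delta v) u * Fuv u v f w) =
          (if u = take N w then \<Sum>v\<in>W N. T (delta v) (take N w) * f (v @ drop N w) else 0)"
          unfolding Fuv_def lu by (auto intro!: sum.cong)
      qed
      also have "\<dots> = (if N \<le> length w then (\<Sum>v\<in>W N. T (delta v) (take N w) * f (v @ drop N w)) else 0)"
        by (simp add: sum.delta' W_def min_def)
      finally have P2: "(\<Sum>u\<in>W N. 1 * (\<Sum>v\<in>W N. T (delta v) u * Fuv u v f w)) =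
            (if N \<le> length w then (\<Sum>v\<in>W N. T (delta v) (take N w) * f (v @ drop N w)) else 0)" .
      show "Sc N f w = (\<Sum>k\<in>{..<N}. 1 * (\<Sum>u\<in>W k. 1 * (\<Sum>v\<in>W k. T (delta v) u * Euv u v f w)))
         + (\<Sum>u\<in>W N. 1 * (\<Sum>v\<in>W N. T (delta v) u * Fuv u v f w))"
        unfolding P1 P2 Sc_def by auto
    qed
  qed
qed

end




context Tctx begin

lemma main:
  assumes sm: "summable (\<lambda>n. opnorm_on (fock_n (Suc (Suc n))) (op_diff T (tensor_id (Suc n) T)))"
  shows "T \<in> cuntz_toeplitz"
  unfolding cuntz_toeplitz_def
proof (intro CollectI conjI allI impI)
  show "bounded_op T" by (rule bT)
  fix e :: real assume e: "e > 0"
  define b where "b m = opnorm_on (fock_n (Suc m)) (Bm m)" for m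
  have bnn: "b m \<ge> 0" for m unfolding b_def by (rule Bm_props(1))
  have sm': "summable (\<lambda>n. b (Suc n))" using sm by (simp add: b_def Bm_def)
  obtain M where M: "\<And>n. n \<ge> M \<Longrightarrow> norm (\<Sum>i. b (Suc (i + n))) < e / 2"
    using suminf_exist_split[OF _ sm', of "e / 2"] e by auto
  define \<epsilon> where "\<epsilon> = (\<Sum>i. b (Suc (i + M)))"
  have smM: "summable (\<lambda>i. b (Suc (i + M)))" using sm' summable_iff_shift[of "\<lambda>n. b (Suc n)" M] by simp
  have eps0: "\<epsilon> \<ge> 0" unfolding \<epsilon>_def by (rule suminf_nonneg[OF smM bnn])
  have epse: "\<epsilon> < e / 2" using M[of M] eps0 unfolding \<epsilon>_def by simp
  define N where "N = Suc M"
  have blk: "L2_set (\<lambda>w. cmod (T g w - Sc N g w)) (W k) \<le> \<epsilon> * L2_set (\<lambda>w. cmod (g w)) (W k)"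
    if g: "g \<in> fock_n k" for g k
  proof (cases "k < N")
    case True
    have "L2_set (\<lambda>w. cmod (T g w - Sc N g w)) (W k) = 0"
      by (rule L2_set_0') (auto simp: W_def Sc_block[OF g] True)
    then show ?thesis using eps0 by simp
  next
    case False
    have "L2_set (\<lambda>w. cmod (T g w - Sc N g w)) (W k) = L2_set (\<lambda>w. cmod (T g w - tens N T g w)) (W k)"
      by (rule L2_set_cong) (auto simp: W_def Sc_block[OF g] False)
    also have "\<dots> \<le> (\<Sum>m\<in>{N..<k}. b m) * L2_set (\<lambda>w. cmod (g w)) (W k)"
      unfolding b_def using False by (intro block_est[OF g]) simp
    also have "\<dots> \<le> \<epsilon> * L2_set (\<lambda>w. cmod (g w)) (W k)"
    proof (rule mult_right_mono)
      have "(\<Sum>m\<in>{N..<k}. b m) = (\<Sum>m\<in>{0 + Suc M..<(k - Suc M) + Suc M}. b m)"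
        using False by (simp add: N_def)
      also have "\<dots> = (\<Sum>i\<in>{0..<k - Suc M}. b (i + Suc M))"
        by (rule sum.shift_bounds_nat_ivl)
      also have "\<dots> \<le> \<epsilon>" unfolding \<epsilon>_def
        by (simp, rule sum_le_suminf[OF smM]) (auto simp: bnn)
      finally show "(\<Sum>m\<in>{N..<k}. b m) \<le> \<epsilon>" .
    qed simp
    finally show ?thesis .
  qed
  obtain S where S: "S \<in> star_alg_L" "\<And>f. f \<in> fock \<Longrightarrow> S f = Sc N f"
    using good_Sc[of N] unfolding good_def by blast
  have fb: "fnorm (op_diff T S f) \<le> \<epsilon> * fnorm f" if f: "f \<in> fock" for f
  proof -
    define D where "D = (\<lambda>w. T f w - Sc N f w)"
    have DS: "op_diff T S f = D" using S(2)[OF f] by (simp add: op_diff_def D_def)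
    define s where "s = (\<Sum>\<^sub>\<infinity>w. (cmod (f w))\<^sup>2)"
    have sf: "(\<lambda>w. (cmod (f w))\<^sup>2) summable_on UNIV" using f by (simp add: fock_def)
    have fin: "(\<Sum>w\<in>F. (cmod (D w))\<^sup>2) \<le> \<epsilon>\<^sup>2 * s" if F: "finite F" for F
    proof -
      define K where "K = Suc (Max (insert 0 (length ` F)))"
      have FK: "F \<subseteq> {x. length x < K}" using F unfolding K_def by (auto simp: le_imp_less_Suc)
      have "(\<Sum>w\<in>F. (cmod (D w))\<^sup>2) \<le> (\<Sum>w\<in>{x. length x < K}. (cmod (D w))\<^sup>2)"
        by (rule sum_mono2[OF _ FK]) auto
      also have "\<dots> = (\<Sum>k<K. \<Sum>w\<in>W k. (cmod (D w))\<^sup>2)" by (rule group_len)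
      also have "\<dots> \<le> (\<Sum>k<K. \<epsilon>\<^sup>2 * (\<Sum>w\<in>W k. (cmod (f w))\<^sup>2))"
      proof (rule sum_mono)
        fix k assume "k \<in> {..<K}"
        define fk where "fk = (\<lambda>x. if length x = k then f x else 0)"
        have fk: "fk \<in> fock_n k" by (simp add: fock_n_iff fk_def)
        have "(\<Sum>w\<in>W k. (cmod (D w))\<^sup>2) = (\<Sum>w\<in>W k. (cmod (T fk w - Sc N fk w))\<^sup>2)"
        proof (rule sum.cong[OF refl])
          fix w assume "w \<in> (W k :: 'd list set)"
          then have lw: "length w = k" by (simp add: W_def)
          show "(cmod (D w))\<^sup>2 = (cmod (T fk w - Sc N fk w))\<^sup>2"
            unfolding D_def fk_def using T_local[OF f, of w] Sc_local[OF lw, of N f] lw by simp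
        qed
        also have "\<dots> \<le> \<epsilon>\<^sup>2 * (\<Sum>w\<in>W k. (cmod (fk w))\<^sup>2)"
          by (rule L2_le_sq[OF blk[OF fk] eps0]) simp
        also have "(\<Sum>w\<in>W k. (cmod (fk w))\<^sup>2) = (\<Sum>w\<in>W k. (cmod (f w))\<^sup>2)"
          by (rule sum.cong) (auto simp: fk_def W_def)
        finally show "(\<Sum>w\<in>W k. (cmod (D w))\<^sup>2) \<le> \<epsilon>\<^sup>2 * (\<Sum>w\<in>W k. (cmod (f w))\<^sup>2)" .
      qed
      also have "\<dots> = \<epsilon>\<^sup>2 * (\<Sum>w\<in>{x. length x < K}. (cmod (f w))\<^sup>2)"
        by (simp add: group_len sum_distrib_left)
      also have "\<dots> \<le> \<epsilon>\<^sup>2 * s" unfolding s_def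
        by (rule mult_left_mono[OF finite_sum_le_infsum[OF sf]]) auto
      finally show ?thesis .
    qed
    have sD: "(\<lambda>w. (cmod (D w))\<^sup>2) summable_on UNIV"
      by (rule nonneg_bdd_above_summable_on) (auto intro!: bdd_aboveI[of _ "\<epsilon>\<^sup>2 * s"] fin)
    have "(\<Sum>\<^sub>\<infinity>w. (cmod (D w))\<^sup>2) \<le> \<epsilon>\<^sup>2 * s"
      by (rule infsum_le_finite_sums[OF sD]) (rule fin)
    then have "fnorm D \<le> sqrt (\<epsilon>\<^sup>2 * s)" unfolding fnorm_def by simp
    also have "\<dots> = \<epsilon> * fnorm f" using eps0 by (simp add: fnorm_def s_def real_sqrt_mult)
    finally show ?thesis using DS by simp
  qed
  have "opnorm_on fock (op_diff T S) \<le> \<epsilon>"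
    unfolding opnorm_on_def
  proof (rule cSup_least)
    show "{fnorm (op_diff T S f) |f. f \<in> fock \<and> fnorm f \<le> 1} \<noteq> {}"
    proof -
      have "(\<lambda>w. 0) \<in> fock \<and> fnorm (\<lambda>w::'d list. 0::complex) \<le> 1" by (simp add: fnorm_def)
      then show ?thesis by blast
    qed
    fix x assume "x \<in> {fnorm (op_diff T S f) |f. f \<in> fock \<and> fnorm f \<le> 1}"
    then obtain f where f: "f \<in> fock" "fnorm f \<le> 1" "x = fnorm (op_diff T S f)" by blast
    have "x \<le> \<epsilon> * fnorm f" using fb[OF f(1)] f(3) by simp
    also have "\<dots> \<le> \<epsilon>" using f(2) eps0 by (simp add: mult_left_le)
    finally show "x \<le> \<epsilon>" .
  qed
  then have "opnorm_on fock (op_diff T S) < e" using epse e by simp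
  then show "\<exists>S\<in>star_alg_L. opnorm_on fock (op_diff T S) < e" using S(1) by blast
qed

end

theorem lemma3p4:
  fixes T :: "('d::finite) op"
  assumes "CARD('d) \<ge> 2"
    and "bounded_op T"
    and "block_diagonal T"
    and "summable (\<lambda>n. opnorm_on (fock_n (Suc (Suc n))) (op_diff T (tensor_id (Suc n) T)))"
  shows "T \<in> cuntz_toeplitz"
proof -
  interpret Tctx T by (rule Tctx.intro[OF assms(2,3)])
  show ?thesis by (rule main[OF assms(4)])
qed


end
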